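(* Let $d\ge1$. For any $\nu>0$ and any $M\ge\big[-d\cdot W_{-1}\big(-\nu^{2/d}/(2\pi e)\big)\big]^{1/2}$, it holds that \[\int_{\{u\in\mathbb{R}^d:\ \|u\|\ge M\}}e^{-\|u\|^2/2}\,du\le\nu.\]
   Context: $W_{-1}$ denotes the negative real branch of the Lambert $W$ function, i.e., the inverse of $t\mapsto te^t$ restricted to $(-\infty,-1]$, mapping $[-1/e,0)$ onto $(-\infty,-1]$; by convention $W_{-1}(t)=0$ if $t<-1/e$. $\|\cdot\|$ is the Euclidean norm. *)

theory Defs
  imports "HOL-Analysis.Analysis"
begin

text \<open>Negative real branch of the Lambert W function: inverse of
  w \<mapsto> w * exp w restricted to (-\<infinity>,-1], defined on [-1/e,0);
  by convention W_{-1}(t) = 0 for t < -1/e.\<close>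
definition lambertW_m1 :: "real \<Rightarrow> real" where
  "lambertW_m1 t = (if t < - exp (-1) then 0
                    else (THE w. w \<le> -1 \<and> w * exp w = t))"

end

theory Submission imports Defs "HOL-Probability.Distributions" "HOL-Real_Asymp.Real_Asymp" begin

lemma gauss1:
  fixes s :: real assumes s: "s > 0"
  shows "(\<integral>\<^sup>+x. ennreal (exp (- s * x\<^sup>2 / 2)) \<partial>lborel) = ennreal (sqrt (2*pi/s))"
proof -
  define \<sigma> where "\<sigma> = 1 / sqrt s"
  have sp: "\<sigma> > 0" using s by (simp add: \<sigma>_def)
  have sq: "\<sigma>\<^sup>2 = 1 / s" using s by (simp add: \<sigma>_def power_divide)
  have eq: "exp (- s * x\<^sup>2 / 2) = sqrt (2*pi/s) * normal_density 0 \<sigma> x" for x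
    using s by (simp add: normal_density_def sq real_sqrt_divide field_simps)
  have eq2: "ennreal (exp (- s * x\<^sup>2 / 2)) = ennreal (sqrt (2*pi/s)) * ennreal (normal_density 0 \<sigma> x)" for x
    by (subst eq, rule ennreal_mult) (use s in auto)
  have "(\<integral>\<^sup>+x. ennreal (exp (- s * x\<^sup>2 / 2)) \<partial>lborel)
      = (\<integral>\<^sup>+x. ennreal (sqrt (2*pi/s)) * ennreal (normal_density 0 \<sigma> x) \<partial>lborel)"
    by (intro nn_integral_cong) (rule eq2)
  also have "\<dots> = ennreal (sqrt (2*pi/s)) * (\<integral>\<^sup>+x. ennreal (normal_density 0 \<sigma> x) \<partial>lborel)"
    by (rule nn_integral_cmult) simp
  also have "(\<integral>\<^sup>+x. ennreal (normal_density 0 \<sigma> x) \<partial>lborel) = 1"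
    using sp by (subst nn_integral_eq_integral) auto
  finally show ?thesis by simp
qed

lemma gaussd:
  fixes s :: real assumes s: "s > 0"
  shows "(\<integral>\<^sup>+u. ennreal (exp (- s * (norm (u::'a::euclidean_space))\<^sup>2 / 2)) \<partial>lborel)
     = ennreal (sqrt (2*pi/s) ^ DIM('a))"
proof -
  have "exp (- s * (norm u)\<^sup>2 / 2) = (\<Prod>b\<in>Basis. exp (- s * (u \<bullet> b)\<^sup>2 / 2))" for u :: 'a
  proof -
    have "(norm u)\<^sup>2 = (\<Sum>b\<in>Basis. (u \<bullet> b)\<^sup>2)"
      unfolding power2_norm_eq_inner by (subst euclidean_inner) (simp add: power2_eq_square)
    then have "- s * (norm u)\<^sup>2 / 2 = (\<Sum>b\<in>Basis. - s * (u \<bullet> b)\<^sup>2 / 2)"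
      by (simp add: sum_distrib_left sum_divide_distrib)
    then show ?thesis by (simp add: exp_sum)
  qed
  then have "(\<integral>\<^sup>+u. ennreal (exp (- s * (norm (u::'a))\<^sup>2 / 2)) \<partial>lborel)
     = (\<integral>\<^sup>+u. (\<Prod>b\<in>(Basis::'a set). ennreal (exp (- s * (u \<bullet> b)\<^sup>2 / 2))) \<partial>lborel)"
    by (simp add: prod_ennreal)
  also have "\<dots> = (\<Prod>b\<in>(Basis::'a set). (\<integral>\<^sup>+x. ennreal (exp (- s * x\<^sup>2 / 2)) \<partial>lborel))"
    by (rule nn_integral_lborel_prod[where f="\<lambda>b x. ennreal (exp (- s * x\<^sup>2 / 2))"]) auto
  also have "\<dots> = ennreal (sqrt (2*pi/s) ^ DIM('a))"
    by (simp only: gauss1[OF s] prod_constant) (rule ennreal_power, use s in simp)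
  finally show ?thesis .
qed

lemma tail_bound:
  fixes s M :: real assumes s: "0 < s" "s \<le> 1" and M: "0 \<le> M"
  shows "(LINT u:{u::'a::euclidean_space. norm u \<ge> M}|lborel. exp (- (norm u)\<^sup>2 / 2))
     \<le> exp (- (1 - s) * M\<^sup>2 / 2) * sqrt (2*pi/s) ^ DIM('a)"
proof -
  let ?c = "exp (- (1 - s) * M\<^sup>2 / 2)"
  let ?A = "{u::'a. norm u \<ge> M}"
  have eqI: "(\<integral>\<^sup>+u. ennreal ?c * ennreal (exp (- s * (norm (u::'a))\<^sup>2 / 2)) \<partial>lborel)
     = ennreal ?c * ennreal (sqrt (2*pi/s) ^ DIM('a))"
    by (subst nn_integral_cmult, simp, subst gaussd[OF s(1)], rule refl)
  have A[measurable]: "?A \<in> sets lborel" by measurable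
  have "(LINT u:?A|lborel. exp (- (norm u)\<^sup>2 / 2))
      = enn2real (\<integral>\<^sup>+u. ennreal (indicator ?A u *\<^sub>R exp (- (norm u)\<^sup>2 / 2)) \<partial>lborel)"
    unfolding set_lebesgue_integral_def
    by (rule integral_eq_nn_integral) (auto split: split_indicator)
  also have "\<dots> \<le> enn2real (\<integral>\<^sup>+u. ennreal ?c * ennreal (exp (- s * (norm (u::'a))\<^sup>2 / 2)) \<partial>lborel)"
  proof -
    have pw: "ennreal (indicator ?A u *\<^sub>R exp (- (norm u)\<^sup>2 / 2))
          \<le> ennreal ?c * ennreal (exp (- s * (norm u)\<^sup>2 / 2))" for u :: 'a
      proof (cases "u \<in> ?A")
        case True
        then have "M\<^sup>2 \<le> (norm u)\<^sup>2" using M by (auto intro: power_mono)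
        then have "(1 - s) * M\<^sup>2 \<le> (1 - s) * (norm u)\<^sup>2" using s by (intro mult_left_mono) auto
        then have "- (norm u)\<^sup>2 / 2 \<le> - (1 - s) * M\<^sup>2 / 2 + - s * (norm u)\<^sup>2 / 2"
          by (simp add: algebra_simps)
        then have "exp (- (norm u)\<^sup>2 / 2) \<le> exp (- (1 - s) * M\<^sup>2 / 2 + - s * (norm u)\<^sup>2 / 2)"
          by (simp only: exp_le_cancel_iff)
        then have "exp (- (norm u)\<^sup>2 / 2) \<le> ?c * exp (- s * (norm u)\<^sup>2 / 2)"
          by (simp only: exp_add)
        then show ?thesis using True by (simp add: ennreal_mult[symmetric])
      qed simp
    have le: "(\<integral>\<^sup>+u. ennreal (indicator ?A u *\<^sub>R exp (- (norm u)\<^sup>2 / 2)) \<partial>lborel)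
        \<le> (\<integral>\<^sup>+u. ennreal ?c * ennreal (exp (- s * (norm (u::'a))\<^sup>2 / 2)) \<partial>lborel)"
      by (intro nn_integral_mono pw)
    have fin: "(\<integral>\<^sup>+u. ennreal ?c * ennreal (exp (- s * (norm (u::'a))\<^sup>2 / 2)) \<partial>lborel) < top"
      by (simp only: eqI ennreal_mult_less_top) simp
    show ?thesis by (rule enn2real_mono[OF le fin])
  qed
  also have "\<dots> = ?c * sqrt (2*pi/s) ^ DIM('a)"
    unfolding eqI using s by (subst ennreal_mult[symmetric]) auto
  finally show ?thesis .
qed

lemma wexp_strict:
  fixes a b :: real assumes "a < b" "b \<le> -1"
  shows "b * exp b < a * exp a"
proof -
  define d where "d = b - a"
  have d: "d > 0" using assms by (simp add: d_def)
  have "(1 + d/2)\<^sup>2 \<le> (exp (d/2))\<^sup>2"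
    using d by (intro power_mono) auto
  also have "(exp (d/2))\<^sup>2 = exp d" unfolding power2_eq_square mult_exp_exp by simp
  finally have e: "1 + d < exp d" using d by (simp add: power2_eq_square field_simps)
       (smt (verit) mult_pos_pos)
  have "b * (exp d - 1) \<le> - (exp d - 1)"
    using assms e d by (intro mult_right_mono[of b "-1", simplified]) auto
  then have "b * exp d < a" using e by (simp add: d_def algebra_simps)
  then have "b * exp d * exp a < a * exp a" by simp
  moreover have "exp d * exp a = exp b" by (simp add: d_def mult_exp_exp)
  ultimately show ?thesis by (simp add: mult.assoc)
qed

lemma W_props:
  fixes t :: real assumes t1: "- exp (-1) \<le> t" and t0: "t < 0"
  shows "lambertW_m1 t \<le> -1 \<and> lambertW_m1 t * exp (lambertW_m1 t) = t"
proof -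
  have "((\<lambda>w::real. w * exp w) \<longlongrightarrow> 0) at_bot" by real_asymp
  then have "eventually (\<lambda>w::real. w * exp w > t) at_bot"
    using t0 by (rule order_tendstoD)
  then obtain a0 where a0: "\<And>w. w \<le> a0 \<Longrightarrow> w * exp w > t"
    by (auto simp: eventually_at_bot_linorder)
  define a where "a = min a0 (-1)"
  have h1: "t \<le> a * exp a" using a0[of a] by (simp add: a_def)
  have h2: "(-1) * exp (-1) \<le> t" using t1 by simp
  have h3: "a \<le> -1" by (simp add: a_def)
  have "\<exists>x. a \<le> x \<and> x \<le> -1 \<and> x * exp x = t"
    by (rule IVT2[OF h2 h1 h3]) (auto intro!: continuous_intros)
  then obtain w where w: "w \<le> -1" "w * exp w = t" by auto
  have "\<exists>!w. w \<le> -1 \<and> w * exp w = t"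
  proof (rule ex1I[of _ w])
    fix v assume v: "v \<le> -1 \<and> v * exp v = t"
    show "v = w"
    proof (rule ccontr)
      assume "v \<noteq> w"
      then consider "v < w" | "w < v" by linarith
      then show False using wexp_strict[of v w] wexp_strict[of w v] v w by cases auto
    qed
  qed (use w in auto)
  then have "(THE w. w \<le> -1 \<and> w * exp w = t) \<le> -1 \<and> (THE w. w \<le> -1 \<and> w * exp w = t) * exp (THE w. w \<le> -1 \<and> w * exp w = t) = t"
    by (rule theI')
  then show ?thesis using t1 by (simp add: lambertW_m1_def)
qed


lemma sqrt_pow_powr:
  fixes y :: real assumes y: "0 \<le> y" and n: "n > 0"
  shows "sqrt y ^ n = y powr (real n / 2)"
proof (cases "y = 0")
  case True then show ?thesis using n by (cases n) auto
next
  case False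
  have "sqrt y = y powr (1/2)" using y by (simp add: powr_half_sqrt)
  then show ?thesis using False y by (simp add: powr_power)
qed

theorem lemma3p6:
  fixes \<nu> M :: real
  assumes "\<nu> > 0"
    and "M \<ge> sqrt (- real DIM('a::euclidean_space)
            * lambertW_m1 (- (\<nu> powr (2 / real DIM('a))) / (2 * pi * exp 1)))"
  shows "(LINT u:{u::'a. norm u \<ge> M}|lborel. exp (- (norm u)\<^sup>2 / 2)) \<le> \<nu>"
proof -
  define n where "n = real DIM('a)"
  have n: "n \<ge> 1" by (simp add: n_def DIM_positive Suc_le_eq)
  define t where "t = - (\<nu> powr (2 / n)) / (2 * pi * exp 1)"
  have t0: "t < 0" using assms(1) by (simp add: t_def)
  have Mge: "M \<ge> sqrt (- n * lambertW_m1 t)" using assms(2) by (simp add: n_def t_def)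
  have nu_eq: "(\<nu> powr (2 / n)) powr (n / 2) = \<nu>" using n assms(1) by (simp add: powr_powr)
  show ?thesis
  proof (cases "t < - exp (-1)")
    case True
    then have W: "lambertW_m1 t = 0" by (simp add: lambertW_m1_def)
    then have M0: "M \<ge> 0" using Mge by simp
    have "\<nu> powr (2 / n) / (2 * pi * exp 1) > exp (-1)" using True by (simp add: t_def)
    then have "\<nu> powr (2 / n) > exp (-1) * (2 * pi * exp 1)"
      by (simp add: pos_less_divide_eq)
    also have "exp (-1) * (2 * pi * exp 1) = 2 * pi"
      by (simp add: exp_minus field_simps)
    finally have lt: "2 * pi < \<nu> powr (2 / n)" .
    have "(LINT u:{u::'a. norm u \<ge> M}|lborel. exp (- (norm u)\<^sup>2 / 2))
        \<le> exp (- (1 - 1) * M\<^sup>2 / 2) * sqrt (2*pi/1) ^ DIM('a)"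
      by (rule tail_bound) (use M0 in auto)
    also have "\<dots> = (2 * pi) powr (n / 2)" by (simp add: sqrt_pow_powr n_def DIM_positive)
    also have "\<dots> < (\<nu> powr (2 / n)) powr (n / 2)"
      using lt n by (intro powr_less_mono2) auto
    finally show ?thesis using nu_eq by simp
  next
    case False
    define W where "W = lambertW_m1 t"
    have W: "W \<le> -1" "W * exp W = t" using W_props[of t] False t0 by (auto simp: W_def)
    have nW0: "0 \<le> n * (- W)" by (rule mult_nonneg_nonneg) (use W(1) n in auto)
    then have nW: "0 \<le> - n * W" by simp
    have sq0: "0 \<le> sqrt (- n * W)" using nW by simp
    have Mge': "sqrt (- n * W) \<le> M" using Mge by (simp only: W_def)
    have M0: "M \<ge> 0" using sq0 Mge' by linarith
    have "(sqrt (- n * W))\<^sup>2 \<le> M\<^sup>2" using Mge' sq0 by (rule power_mono)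
    then have M2: "M\<^sup>2 \<ge> - n * W" using nW by simp
    define x where "x = M\<^sup>2 / n"
    have xW: "x \<ge> - W" using M2 n by (simp add: x_def field_simps)
    then have x1: "x \<ge> 1" using W by simp
    have Mx: "M\<^sup>2 = x * n" using n by (simp add: x_def)
    have "(-x) * exp (-x) \<ge> t"
    proof (cases "-x = W")
      case True then show ?thesis using W by simp
    next
      case False then have "-x < W" using xW by simp
      from wexp_strict[OF this W(1)] show ?thesis using W by simp
    qed
    then have "x * exp (-x) \<le> \<nu> powr (2 / n) / (2 * pi * exp 1)" by (simp add: t_def)
    then have "x * exp (-x) * (2 * pi * exp 1) \<le> \<nu> powr (2 / n)"
      by (simp add: pos_le_divide_eq)
    moreover have "x * exp (-x) * (2 * pi * exp 1) = 2 * pi * x * exp (1 - x)"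
      by (simp add: exp_diff exp_minus field_simps)
    ultimately have key: "2 * pi * x * exp (1 - x) \<le> \<nu> powr (2 / n)" by simp
    have "(LINT u:{u::'a. norm u \<ge> M}|lborel. exp (- (norm u)\<^sup>2 / 2))
        \<le> exp (- (1 - 1/x) * M\<^sup>2 / 2) * sqrt (2*pi/(1/x)) ^ DIM('a)"
      by (rule tail_bound) (use M0 x1 in auto)
    also have "exp (- (1 - 1/x) * M\<^sup>2 / 2) = exp (1 - x) powr (n / 2)"
      using x1 n by (simp add: Mx exp_powr_real field_simps)
    also have "sqrt (2*pi/(1/x)) ^ DIM('a) = (2 * pi * x) powr (n / 2)"
      using x1 by (simp add: sqrt_pow_powr n_def DIM_positive)
    also have "exp (1 - x) powr (n / 2) * (2 * pi * x) powr (n / 2) = (2 * pi * x * exp (1 - x)) powr (n / 2)"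
      by (simp add: powr_mult)
    also have "\<dots> \<le> (\<nu> powr (2 / n)) powr (n / 2)"
      using key x1 n by (intro powr_mono2) auto
    finally show ?thesis using nu_eq by simp
  qed
qed

end
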